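(* In the toy model (see context), let $(\vec m,\vec z)$ be a configuration that is not a threshold configuration, let $i=\arg\max_k z_k$, and let $i_L<i<i_R$ be the indices closest to $i$ on the left and on the right, respectively, with $z_{i_L}+1\le z_i$ and $z_{i_R}+1\le z_i$. Let $\ell=(i-i_L)\wedge(i_R-i)$ and $W_k=[i_L+k,\,i_R-k]$ (integer interval) for $k=1,\dots,\ell$. Then the first $\ell$ iterations of the ZFA applied to $(\vec m,\vec z)$ cause jumps exactly at the sites of $W_1,\dots,W_\ell$, respectively; throughout this process, at least until after the $\ell$-th iteration, site $i$ remains the location of the maximum of $\vec z$ and the original value $z_i$ remains the maximum value. Consequently: (i) the total number of jumps in these $\ell$ iterations is $(i-i_L)(i_R-i)$; (ii) the resulting changes of the configuration are $z_{i_L}\to z_{i_L}+1$, $z_{i_R}\to z_{i_R}+1$, $z_i\to z_i-1$, $z_{i_L+i_R-i}\to z_{i_L+i_R-i}-1$ (in the case $i-i_L=i_R-i$ this means $z_i\to z_i-2$), all other $z_j$ unchanged, and $$m_j\to m_j+(j-i_L)_+-(j-i)_+-(j-i-i_R+i_L)_+ +(j-i_R)_+ .$$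
   Context: Toy model: $L$ sites with periodic boundary conditions (indices mod $L$, sequences extended periodically); disorder $\alpha_0,\dots,\alpha_{L-1}$ i.i.d. uniform on $(-\tfrac12,\tfrac12)$; $\Delta x_i=x_{i-1}-2x_i+x_{i+1}$ (periodic). A configuration is $\vec m\in\mathbb Z^L$ with rescaled well coordinates $z_i=\Delta m_i+\Delta\alpha_i$. A threshold configuration attains $\min_{\vec m}\max_i z_i$. A jump at site $j$ means $m_j\to m_j+1$, which gives $z_j\to z_j-2$, $z_{j\pm1}\to z_{j\pm1}+1$. One iteration of the zero-force avalanche (ZFA) applied to $\vec m$: record $z_{\max}=\max_k z_k$, then repeatedly jump the current maximizing site $\arg\max_k z_k$ as long as some current $z_k$ exceeds $z_{\max}$. Notation: $a\wedge b=\min(a,b)$, $x_+=\max(0,x)$. *)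

theory Defs
  imports Complex_Main "HOL-Library.Multiset"
begin

text \<open>Toy model with L sites and periodic boundary conditions. Sequences are
functions on int; only the values on the representatives 0..L-1 matter, and
every index is reduced mod L (periodic extension).\<close>

definition lap :: "nat \<Rightarrow> (int \<Rightarrow> 'a::ring_1) \<Rightarrow> int \<Rightarrow> 'a" where
  "lap L x j = x ((j - 1) mod int L) - 2 * x (j mod int L) + x ((j + 1) mod int L)"

definition zc :: "nat \<Rightarrow> (int \<Rightarrow> real) \<Rightarrow> (int \<Rightarrow> int) \<Rightarrow> int \<Rightarrow> real" where
  "zc L alpha m j = of_int (lap L m j) + lap L alpha j"

definition zmax :: "nat \<Rightarrow> (int \<Rightarrow> real) \<Rightarrow> (int \<Rightarrow> int) \<Rightarrow> real" where
  "zmax L alpha m = Max (zc L alpha m ` {0..<int L})"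

definition threshold :: "nat \<Rightarrow> (int \<Rightarrow> real) \<Rightarrow> (int \<Rightarrow> int) \<Rightarrow> bool" where
  "threshold L alpha m \<longleftrightarrow> (\<forall>m'. zmax L alpha m \<le> zmax L alpha m')"

text \<open>The site (representative in 0..L-1) where the maximum of z is attained
(unique under the genericity condition below).\<close>
definition amax :: "nat \<Rightarrow> (int \<Rightarrow> real) \<Rightarrow> (int \<Rightarrow> int) \<Rightarrow> int" where
  "amax L alpha m = (SOME k. k \<in> {0..<int L} \<and> zc L alpha m k = zmax L alpha m)"

definition jump :: "nat \<Rightarrow> int \<Rightarrow> (int \<Rightarrow> int) \<Rightarrow> (int \<Rightarrow> int)" where
  "jump L j m = m(j mod int L := m (j mod int L) + 1)"

text \<open>Continuation phase of one ZFA iteration with recorded value zm: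
keep jumping the current maximiser while some z exceeds zm.
zfa_cont L alpha zm m js m' : starting from m, the sites jumped are js
(in order) and the process stops at m'.\<close>
inductive zfa_cont :: "nat \<Rightarrow> (int \<Rightarrow> real) \<Rightarrow> real \<Rightarrow> (int \<Rightarrow> int) \<Rightarrow> int list \<Rightarrow> (int \<Rightarrow> int) \<Rightarrow> bool"
  for L alpha zm where
  stop: "zmax L alpha m \<le> zm \<Longrightarrow> zfa_cont L alpha zm m [] m"
| step: "zmax L alpha m > zm \<Longrightarrow> zfa_cont L alpha zm (jump L (amax L alpha m) m) js m'
          \<Longrightarrow> zfa_cont L alpha zm m (amax L alpha m # js) m'"

definition zfa_iter :: "nat \<Rightarrow> (int \<Rightarrow> real) \<Rightarrow> (int \<Rightarrow> int) \<Rightarrow> int list \<Rightarrow> (int \<Rightarrow> int) \<Rightarrow> bool" where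
  "zfa_iter L alpha m js m' \<longleftrightarrow>
     (\<exists>js'. js = amax L alpha m # js' \<and>
        zfa_cont L alpha (zmax L alpha m) (jump L (amax L alpha m) m) js' m')"

text \<open>Genericity of the disorder (holds almost surely): no two distinct
sites have Delta alpha values differing by an integer, so z-values at
distinct sites never tie.\<close>
definition generic :: "nat \<Rightarrow> (int \<Rightarrow> real) \<Rightarrow> bool" where
  "generic L alpha \<longleftrightarrow> (\<forall>j\<in>{0..<int L}. \<forall>k\<in>{0..<int L}. j \<noteq> k \<longrightarrow> lap L alpha j - lap L alpha k \<notin> \<int>)"

definition ind :: "nat \<Rightarrow> int \<Rightarrow> int \<Rightarrow> real" where
  "ind L a j = (if j mod int L = a mod int L then 1 else 0)"

definition pos :: "int \<Rightarrow> int" where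
  "pos x = max 0 x"

end

theory Submission
  imports Defs
begin


lemma mod_small: "0 \<le> k \<Longrightarrow> k < (L::int) \<Longrightarrow> k mod L = k" by simp
lemma mod_neg_small: "- L \<le> k \<Longrightarrow> k < 0 \<Longrightarrow> k mod (L::int) = k + L"
proof -
  assume a: "- L \<le> k" "k < 0"
  have "k mod L = (k + L) mod L" by simp
  also have "\<dots> = k + L" using a by (intro mod_pos_pos_trivial) auto
  finally show ?thesis .
qed
lemma mod_big: "L \<le> k \<Longrightarrow> k < 2*L \<Longrightarrow> k mod (L::int) = k - L"
proof -
  assume a: "L \<le> k" "k < 2*L"
  have "(k - L) mod L = k mod L" by simp
  then have "k mod L = (k - L) mod L" by simp
  also have "\<dots> = k - L" using a by (intro mod_pos_pos_trivial) auto
  finally show ?thesis .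
qed

lemma dvd_small: "int L dvd d \<Longrightarrow> - int L < d \<Longrightarrow> d < int L \<Longrightarrow> d = 0"
proof (rule ccontr)
  assume a: "int L dvd d" "- int L < d" "d < int L" "d \<noteq> 0"
  show False
  proof (cases "d > 0")
    case True then have "int L \<le> d" using a zdvd_imp_le by blast
    then show False using a by simp
  next
    case False then have "0 < - d" using a by simp
    moreover have "int L dvd - d" using a by simp
    ultimately have "int L \<le> - d" using zdvd_imp_le by blast
    then show False using a by simp
  qed
qed

lemma eqmod: "(y mod int L = a mod int L) = (int L dvd (y - a))"
  by (rule mod_eq_dvd_iff)

lemma eqmod_same: "- int L < y - a \<Longrightarrow> y - a < int L \<Longrightarrow> y mod int L = a mod int L \<Longrightarrow> y = a"
proof -
  assume a: "- int L < y - a" "y - a < int L" "y mod int L = a mod int L"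
  then have "int L dvd (y - a)" by (simp add: eqmod)
  then have "y - a = 0" using a dvd_small by blast
  then show ?thesis by simp
qed

lemma lap_mod: "lap L x (y mod int L) = lap L x y"
  unfolding lap_def by (simp add: mod_simps)

lemma zc_mod: "zc L alpha m (y mod int L) = zc L alpha m y"
  unfolding zc_def by (simp add: lap_mod)

lemma zc_cong: "y mod int L = y' mod int L \<Longrightarrow> zc L alpha m y = zc L alpha m y'"
proof -
  assume "y mod int L = y' mod int L"
  then have "zc L alpha m (y mod int L) = zc L alpha m (y' mod int L)" by simp
  then show ?thesis by (simp only: zc_mod)
qed

lemma ind_cong: "y mod int L = y' mod int L \<Longrightarrow> ind L a y = ind L a y'"
  unfolding ind_def by simp

definition addc :: "nat \<Rightarrow> (int \<Rightarrow> int) \<Rightarrow> (int \<Rightarrow> int) \<Rightarrow> int \<Rightarrow> int" where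
  "addc L m c = (\<lambda>x. if 0 \<le> x \<and> x < int L then m x + c x else m x)"

definition ch :: "nat \<Rightarrow> int \<Rightarrow> int \<Rightarrow> int \<Rightarrow> int" where
  "ch L p q = (\<lambda>x. if (x - p) mod int L \<le> q - p then 1 else 0)"

lemma zc_addc: "0 < L \<Longrightarrow> zc L alpha (addc L m c) y = zc L alpha m y + of_int (lap L c y)"
proof -
  assume L: "0 < L"
  have h: "\<And>x. addc L m c (x mod int L) = m (x mod int L) + c (x mod int L)"
    using L by (simp add: addc_def)
  show ?thesis unfolding zc_def lap_def h by simp
qed

lemma jump_addc: "0 < L \<Longrightarrow> jump L j (addc L m c) = addc L m (\<lambda>x. c x + (if x = j mod int L then 1 else 0))"
  unfolding jump_def addc_def by (auto simp: fun_eq_iff)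

lemma addc_cong: "(\<And>x. 0 \<le> x \<Longrightarrow> x < int L \<Longrightarrow> c x = c' x) \<Longrightarrow> addc L m c = addc L m c'"
  unfolding addc_def by (auto simp: fun_eq_iff)

lemma addc_zero: "addc L m (\<lambda>_. 0) = m"
  unfolding addc_def by auto

lemma addc_addc: "addc L (addc L m c) d = addc L m (\<lambda>x. c x + d x)"
  unfolding addc_def by (auto simp: fun_eq_iff)

lemma zmax_ge: "0 < L \<Longrightarrow> zc L alpha m y \<le> zmax L alpha m"
proof -
  assume "0 < L"
  then have "y mod int L \<in> {0..<int L}" by simp
  then have "zc L alpha m (y mod int L) \<le> zmax L alpha m"
    unfolding zmax_def by (intro Max_ge) auto
  then show ?thesis by (simp add: zc_mod)
qed

lemma zmax_le: "0 < L \<Longrightarrow> (\<And>y. zc L alpha m y \<le> M) \<Longrightarrow> zmax L alpha m \<le> M"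
  unfolding zmax_def by (subst Max_le_iff) auto

lemma zmax_ex: "0 < L \<Longrightarrow> \<exists>k. k \<in> {0..<int L} \<and> zc L alpha m k = zmax L alpha m"
proof -
  assume "0 < L"
  then have "zmax L alpha m \<in> zc L alpha m ` {0..<int L}"
    unfolding zmax_def by (intro Max_in) auto
  then show ?thesis by auto
qed

lemma amax: "0 < L \<Longrightarrow> amax L alpha m \<in> {0..<int L} \<and> zc L alpha m (amax L alpha m) = zmax L alpha m"
  unfolding amax_def using zmax_ex by (rule someI_ex)

lemma generic_eq:
  assumes "generic L alpha" "x \<in> {0..<int L}" "y \<in> {0..<int L}" "zc L alpha m x = zc L alpha m y"
  shows "x = y"
proof (rule ccontr)
  assume "x \<noteq> y"
  then have "lap L alpha x - lap L alpha y \<notin> \<int>" using assms unfolding generic_def by blast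
  moreover have "lap L alpha x - lap L alpha y = of_int (lap L m y - lap L m x)"
    using assms(4) unfolding zc_def by simp
  ultimately show False by (metis Ints_of_int)
qed




lemma modshift: "(y mod int L = c mod int L) = ((y - p) mod int L = (c - p) mod int L)"
  by (simp add: eqmod)

lemma mod_minus1: "0 < L \<Longrightarrow> (-1) mod int L = int L - 1"
  using mod_neg_small[of "int L" "-1"] by simp

lemma lap_ch_int:
  assumes L: "0 < L" and d0: "0 \<le> q - p" and d1: "q - p < int L"
  shows "lap L (ch L p q) y =
    (if y mod int L = (p-1) mod int L then 1 else 0) - (if y mod int L = p mod int L then 1 else 0)
    - (if y mod int L = q mod int L then 1 else 0) + (if y mod int L = (q+1) mod int L then 1 else 0)"
proof -
  define d where "d = q - p"
  define r where "r = (y - p) mod int L"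
  have r0: "0 \<le> r" "r < int L" using L unfolding r_def by auto
  have c1: "ch L p q ((y - 1) mod int L) = (if (if r = 0 then int L - 1 else r - 1) \<le> d then 1 else 0)"
  proof -
    have "((y - 1) mod int L - p) mod int L = (y - p - 1) mod int L" by (simp add: mod_simps algebra_simps)
    also have "\<dots> = (r - 1) mod int L" unfolding r_def by (simp add: mod_simps)
    also have "\<dots> = (if r = 0 then int L - 1 else r - 1)"
      using r0 L mod_minus1 by auto
    finally show ?thesis unfolding ch_def d_def by simp
  qed
  have c2: "ch L p q ((y + 1) mod int L) = (if (if r = int L - 1 then 0 else r + 1) \<le> d then 1 else 0)"
  proof -
    have "((y + 1) mod int L - p) mod int L = (y - p + 1) mod int L" by (simp add: mod_simps algebra_simps)
    also have "\<dots> = (r + 1) mod int L" unfolding r_def by (simp add: mod_simps)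
    also have "\<dots> = (if r = int L - 1 then 0 else r + 1)"
      using r0 L by auto
    finally show ?thesis unfolding ch_def d_def by simp
  qed
  have c0: "ch L p q (y mod int L) = (if r \<le> d then 1 else 0)"
    unfolding ch_def r_def d_def by (simp add: mod_simps)
  have i1: "(y mod int L = (p-1) mod int L) = (r = int L - 1)"
    unfolding r_def using modshift[where y=y and c="p-1" and p=p] by (simp add: L mod_minus1)
  have i2: "(y mod int L = p mod int L) = (r = 0)"
    unfolding r_def using modshift[where y=y and c=p and p=p] by simp
  have i3: "(y mod int L = q mod int L) = (r = d)"
    unfolding r_def d_def using d0 d1 modshift[where y=y and c=q and p=p] by simp
  have i4: "(y mod int L = (q+1) mod int L) = (r = (if d = int L - 1 then 0 else d + 1))"
  proof -
    have "(q + 1 - p) mod int L = (d + 1) mod int L" unfolding d_def by (simp add: algebra_simps)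
    also have "\<dots> = (if d = int L - 1 then 0 else d + 1)" using d0 d1 unfolding d_def by auto
    finally show ?thesis unfolding r_def using modshift[where y=y and c="q+1" and p=p] by simp
  qed
  have "lap L (ch L p q) y = ch L p q ((y - 1) mod int L) - 2 * ch L p q (y mod int L) + ch L p q ((y + 1) mod int L)"
    unfolding lap_def by simp
  also have "\<dots> = (if r = int L - 1 then 1 else 0) - (if r = 0 then 1 else 0) - (if r = d then 1 else 0)
      + (if r = (if d = int L - 1 then 0 else d + 1) then 1 else 0)"
    unfolding c0 c1 c2 using r0 d0 d1 unfolding d_def[symmetric] by (auto split: if_splits)
  finally show ?thesis unfolding i1 i2 i3 i4 .
qed

lemma lap_ch:
  assumes "0 < L" "0 \<le> q - p" "q - p < int L"
  shows "real_of_int (lap L (ch L p q) y) = ind L (p-1) y - ind L p y - ind L q y + ind L (q+1) y"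
  unfolding lap_ch_int[OF assms] ind_def by simp




lemma rep_eq: "0 \<le> x \<Longrightarrow> x < int L \<Longrightarrow> (x = c mod int L) = ((x - p) mod int L = (c - p) mod int L)"
  using modshift[where y=x and c=c and p=p and L=L] by simp

lemma ch_ext_left:
  assumes L: "0 < L" and d0: "0 \<le> q - p" and d1: "q - p + 1 < int L" and x: "0 \<le> x" "x < int L"
  shows "ch L (p-1) q x = ch L p q x + (if x = (p-1) mod int L then 1 else 0)"
proof -
  define r where "r = (x - p) mod int L"
  have r0: "0 \<le> r" "r < int L" using L unfolding r_def by auto
  have a: "(x - (p - 1)) mod int L = (if r = int L - 1 then 0 else r + 1)"
  proof -
    have "(x - (p - 1)) mod int L = (r + 1) mod int L" unfolding r_def by (simp add: mod_simps algebra_simps)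
    then show ?thesis using r0 by auto
  qed
  have b: "(x = (p-1) mod int L) = (r = int L - 1)"
    using rep_eq[OF x, of "p-1" p] L mod_minus1 unfolding r_def by simp
  show ?thesis unfolding ch_def a b r_def[symmetric] using r0 d0 d1 by auto
qed

lemma ch_ext_right:
  assumes L: "0 < L" and d0: "0 \<le> q - p" and d1: "q - p + 1 < int L" and x: "0 \<le> x" "x < int L"
  shows "ch L p (q+1) x = ch L p q x + (if x = (q+1) mod int L then 1 else 0)"
proof -
  define r where "r = (x - p) mod int L"
  have r0: "0 \<le> r" "r < int L" using L unfolding r_def by auto
  have b: "(x = (q+1) mod int L) = (r = q + 1 - p)"
    using rep_eq[OF x, of "q+1" p] d0 d1 unfolding r_def by simp
  show ?thesis unfolding ch_def b r_def[symmetric] using r0 d0 d1 by auto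
qed

lemma ch_single:
  assumes L: "0 < L" and x: "0 \<le> x" "x < int L"
  shows "ch L i i x = (if x = i mod int L then 1 else 0)"
proof -
  define r where "r = (x - i) mod int L"
  have r0: "0 \<le> r" "r < int L" using L unfolding r_def by auto
  have b: "(x = i mod int L) = (r = 0)"
    using rep_eq[OF x, of i i] unfolding r_def by simp
  show ?thesis unfolding ch_def b r_def[symmetric] using r0 by auto
qed




lemma ind01: "ind L c y = 0 \<or> ind L c y = 1" unfolding ind_def by auto
lemma ind_ge0: "0 \<le> ind L c y" unfolding ind_def by auto
lemma ind_self: "ind L c c = 1" unfolding ind_def by auto
lemma ind1_iff: "(ind L c y = 1) = (y mod int L = c mod int L)" unfolding ind_def by auto
lemma ind0: "- int L < y - c \<Longrightarrow> y - c < int L \<Longrightarrow> y \<noteq> c \<Longrightarrow> ind L c y = 0"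
  unfolding ind_def using eqmod_same by auto

lemma dvd_pos_ge: "int L dvd d \<Longrightarrow> 0 < d \<Longrightarrow> int L \<le> d"
  using zdvd_imp_le by blast

lemma ind_both:
  assumes "ind L c y = 1" "ind L c' y = 1"
  shows "int L dvd (c - c')"
  using assms unfolding ind1_iff by (metis eqmod)

lemma cont:
  fixes L :: nat and alpha m0 M a b
  assumes L: "0 < L"
    and ab: "a \<le> b" "b - a + 2 \<le> int L"
    and H1: "\<And>y. zc L alpha m0 y \<le> M"
    and H2: "\<And>y. a \<le> y \<Longrightarrow> y \<le> b \<Longrightarrow> M - 1 < zc L alpha m0 y"
    and H3: "zc L alpha m0 (a-1) \<le> M - 1" "zc L alpha m0 (b+1) \<le> M - 1"
    and H4: "b - a + 2 = int L \<Longrightarrow> zc L alpha m0 (a-1) + 2 \<le> M"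
  shows "a \<le> p \<Longrightarrow> p \<le> q \<Longrightarrow> q \<le> b \<Longrightarrow> \<exists>js. zfa_cont L alpha M (addc L m0 (ch L p q)) js (addc L m0 (ch L a b))
      \<and> mset js + mset (map (\<lambda>j. j mod int L) [p..q]) = mset (map (\<lambda>j. j mod int L) [a..b])"
proof (induction "nat ((p - a) + (b - q))" arbitrary: p q rule: less_induct)
  case less
  note pq = less.prems
  define S where "S = addc L m0 (ch L p q)"
  have zS: "zc L alpha S y = zc L alpha m0 y + ind L (p-1) y - ind L p y - ind L q y + ind L (q+1) y" for y
  proof -
    have "0 \<le> q - p" "q - p < int L" using pq ab by auto
    from lap_ch[OF L this, of y] show ?thesis unfolding S_def zc_addc[OF L] by simp
  qed
  have zSle: "zc L alpha S y \<le> zc L alpha m0 y + ind L (p-1) y + ind L (q+1) y" for y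
    using zS[of y] ind_ge0[of L p y] ind_ge0[of L q y] by linarith
  have K2: "(y mod int L = (p-1) mod int L \<and> a < p) \<or> (y mod int L = (q+1) mod int L \<and> q < b)"
    if gt: "M < zc L alpha S y" for y
  proof (rule ccontr)
    assume neg: "\<not> ?thesis"
    have "zc L alpha S y \<le> M"
    proof (cases "ind L (p-1) y = 1")
      case True
      then have pa: "p = a" using neg pq ind1_iff by auto
      have z1: "zc L alpha m0 y = zc L alpha m0 (a-1)" using True pa ind1_iff zc_cong by metis
      show ?thesis
      proof (cases "ind L (q+1) y = 1")
        case True2: True
        have "int L dvd ((q+1) - (p-1))" using ind_both[OF True2 True] .
        then have "int L \<le> (q+1) - (p-1)" using pq by (intro dvd_pos_ge) auto
        then have "b - a + 2 = int L" using pa pq ab by linarith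
        then show ?thesis using H4 zSle[of y] z1 True True2 by linarith
      next
        case False
        then have "ind L (q+1) y = 0" using ind01 by metis
        then show ?thesis using zSle[of y] z1 True H3 by linarith
      qed
    next
      case False
      then have F: "ind L (p-1) y = 0" using ind01 by metis
      show ?thesis
      proof (cases "ind L (q+1) y = 1")
        case True
        then have qb: "q = b" using neg pq ind1_iff by auto
        have z1: "zc L alpha m0 y = zc L alpha m0 (b+1)" using True qb ind1_iff zc_cong by metis
        then show ?thesis using zSle[of y] z1 True F H3 by linarith
      next
        case False
        then have "ind L (q+1) y = 0" using ind01 by metis
        then show ?thesis using zSle[of y] F H1[of y] by linarith
      qed
    qed
    then show False using gt by linarith
  qed
  show ?case
  proof (cases "p = a \<and> q = b")
    case True
    have "zmax L alpha S \<le> M"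
    proof (rule zmax_le[OF L])
      fix y show "zc L alpha S y \<le> M" using K2[of y] True by force
    qed
    then have "zfa_cont L alpha M S [] S" by (rule zfa_cont.stop)
    then show ?thesis using True S_def by auto
  next
    case False
    have ex: "\<exists>y. M < zc L alpha S y"
    proof (cases "a < p")
      case True
      have "ind L (p-1) (p-1) = 1" by (rule ind_self)
      moreover have "ind L p (p-1) = 0" using ab by (intro ind0) auto
      moreover have "ind L q (p-1) = 0" using ab pq True by (intro ind0) auto
      moreover have "ind L (q+1) (p-1) = 0" using ab pq True by (intro ind0) auto
      moreover have "M - 1 < zc L alpha m0 (p-1)" using True pq by (intro H2) auto
      ultimately show ?thesis using zS[of "p-1"] by (intro exI[of _ "p-1"]) linarith
    next
      case False
      then have qb: "q < b" using \<open>\<not> (p = a \<and> q = b)\<close> pq by auto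
      have "ind L (q+1) (q+1) = 1" by (rule ind_self)
      moreover have "ind L q (q+1) = 0" using ab by (intro ind0) auto
      moreover have "ind L p (q+1) = 0" using ab pq qb by (intro ind0) auto
      moreover have "ind L (p-1) (q+1) = 0" using ab pq qb by (intro ind0) auto
      moreover have "M - 1 < zc L alpha m0 (q+1)" using qb pq by (intro H2) auto
      ultimately show ?thesis using zS[of "q+1"] by (intro exI[of _ "q+1"]) linarith
    qed
    then obtain y0 where y0: "M < zc L alpha S y0" by blast
    have zgt: "M < zmax L alpha S" using y0 zmax_ge[OF L, of alpha S y0] by linarith
    define u where "u = amax L alpha S"
    have u: "0 \<le> u" "u < int L" "zc L alpha S u = zmax L alpha S" using amax[OF L, of alpha S] u_def by auto
    have umod: "u mod int L = u" using u by simp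
    from K2[of u] u zgt umod
    have cases: "(u = (p-1) mod int L \<and> a < p) \<or> (u = (q+1) mod int L \<and> q < b)" by auto
    then show ?thesis
    proof
      assume c: "u = (p-1) mod int L \<and> a < p"
      have d: "0 \<le> q - p" "q - p + 1 < int L" using c pq ab by auto
      have j: "jump L u S = addc L m0 (ch L (p-1) q)"
        unfolding S_def jump_addc[OF L]
        by (rule addc_cong) (use c ch_ext_left[OF L d] in auto)
      obtain js where js: "zfa_cont L alpha M (addc L m0 (ch L (p-1) q)) js (addc L m0 (ch L a b))"
        "mset js + mset (map (\<lambda>j. j mod int L) [p-1..q]) = mset (map (\<lambda>j. j mod int L) [a..b])"
        using less.hyps[of "p-1" q] c pq by auto
      have "zfa_cont L alpha M S (u # js) (addc L m0 (ch L a b))"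
        unfolding u_def by (rule zfa_cont.step) (use zgt js j u_def in auto)
      moreover have "[p-1..q] = (p-1) # [p..q]" using pq upto_rec1[of "p-1" q] by auto
      ultimately show ?thesis using js c S_def by (intro exI[of _ "u # js"]) auto
    next
      assume c: "u = (q+1) mod int L \<and> q < b"
      have d: "0 \<le> q - p" "q - p + 1 < int L" using c pq ab by auto
      have j: "jump L u S = addc L m0 (ch L p (q+1))"
        unfolding S_def jump_addc[OF L]
        by (rule addc_cong) (use c ch_ext_right[OF L d] in auto)
      obtain js where js: "zfa_cont L alpha M (addc L m0 (ch L p (q+1))) js (addc L m0 (ch L a b))"
        "mset js + mset (map (\<lambda>j. j mod int L) [p..q+1]) = mset (map (\<lambda>j. j mod int L) [a..b])"
        using less.hyps[of p "q+1"] c pq by auto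
      have "zfa_cont L alpha M S (u # js) (addc L m0 (ch L a b))"
        unfolding u_def by (rule zfa_cont.step) (use zgt js j u_def in auto)
      moreover have "[p..q+1] = [p..q] @ [q+1]" using pq upto_rec2[of p "q+1"] by auto
      ultimately show ?thesis using js c S_def by (intro exI[of _ "u # js"]) auto
    qed
  qed
qed




lemma iter:
  fixes L :: nat and alpha m0 M a b i
  assumes L: "0 < L" and gen: "generic L alpha"
    and ab: "a \<le> i" "i \<le> b" "b - a + 2 \<le> int L"
    and irep: "0 \<le> i" "i < int L"
    and H1: "\<And>y. zc L alpha m0 y \<le> M"
    and Hi: "zc L alpha m0 i = M"
    and H2: "\<And>y. a \<le> y \<Longrightarrow> y \<le> b \<Longrightarrow> M - 1 < zc L alpha m0 y"
    and H3: "zc L alpha m0 (a-1) \<le> M - 1" "zc L alpha m0 (b+1) \<le> M - 1"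
    and H4: "b - a + 2 = int L \<Longrightarrow> zc L alpha m0 (a-1) + 2 \<le> M"
  shows "zmax L alpha m0 = M \<and> amax L alpha m0 = i \<and>
    (\<exists>js. zfa_iter L alpha m0 js (addc L m0 (ch L a b)) \<and> mset js = mset (map (\<lambda>j. j mod int L) [a..b]))"
proof -
  have zm: "zmax L alpha m0 = M"
    using zmax_le[OF L, of alpha m0 M] H1 zmax_ge[OF L, of alpha m0 i] Hi by force
  have am: "amax L alpha m0 = i"
  proof -
    have "amax L alpha m0 \<in> {0..<int L}" "zc L alpha m0 (amax L alpha m0) = zc L alpha m0 i"
      using amax[OF L, of alpha m0] zm Hi by auto
    then show ?thesis using generic_eq[OF gen] irep by auto
  qed
  have j: "jump L i m0 = addc L m0 (ch L i i)"
  proof -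
    have "jump L i m0 = jump L i (addc L m0 (\<lambda>_. 0))" by (simp add: addc_zero)
    also have "\<dots> = addc L m0 (ch L i i)"
      unfolding jump_addc[OF L] by (rule addc_cong) (use ch_single[OF L] in auto)
    finally show ?thesis .
  qed
  obtain js where js: "zfa_cont L alpha M (addc L m0 (ch L i i)) js (addc L m0 (ch L a b))"
    "mset js + mset (map (\<lambda>j. j mod int L) [i..i]) = mset (map (\<lambda>j. j mod int L) [a..b])"
    using cont[OF L _ ab(3) H1 H2 H3 H4, of i i] ab by auto
  have "zfa_iter L alpha m0 (i # js) (addc L m0 (ch L a b))"
    unfolding zfa_iter_def using js j am zm by auto
  moreover have "mset (i # js) = mset (map (\<lambda>j. j mod int L) [a..b])"
    using js(2) irep by simp
  ultimately show ?thesis using zm am by blast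
qed




lemma zc_diff: "zc L alpha m' y = zc L alpha m y + of_int (lap L (\<lambda>x. m' x - m x) y)"
  unfolding zc_def lap_def by (simp add: algebra_simps)

lemma wrap:
  fixes L :: nat and alpha m i iL iR
  assumes L: "0 < L" and nt: "\<not> threshold L alpha m"
    and Mi: "zc L alpha m i = zmax L alpha m"
    and o: "iL < i" "i < iR" and w: "iR - iL = int L"
    and hyp: "\<forall>j. iL < j \<and> j < iR \<longrightarrow> zc L alpha m i < zc L alpha m j + 1"
  shows "zc L alpha m iL + 2 \<le> zc L alpha m i"
proof (rule ccontr)
  assume c: "\<not> ?thesis"
  define M where "M = zc L alpha m i"
  obtain m' where m': "zmax L alpha m' < zmax L alpha m"
    using nt unfolding threshold_def by (meson not_le)
  define d where "d = (\<lambda>x. m' x - m x)"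
  define \<delta> where "\<delta> = lap L d"
  have z': "zc L alpha m y + of_int (\<delta> y) < M" for y
    using zc_diff[of L alpha m' y m] zmax_ge[OF L, of alpha m' y] m' Mi
    unfolding M_def \<delta>_def d_def by linarith
  have dint: "\<delta> y \<le> 0" if "iL < y" "y < iR" for y
  proof -
    have "of_int (\<delta> y) < (1::real)" using z'[of y] hyp that unfolding M_def by force
    then show ?thesis by simp
  qed
  have di: "\<delta> i \<le> -1"
  proof -
    have "of_int (\<delta> i) < (0::real)" using z'[of i] unfolding M_def by simp
    then show ?thesis by simp
  qed
  have dL: "\<delta> iL \<le> 1"
  proof -
    have "of_int (\<delta> iL) < (2::real)" using z'[of iL] c unfolding M_def by simp
    then show ?thesis by simp
  qed
  define D where "D t = d ((iL + int t + 1) mod int L) - d ((iL + int t) mod int L)" for t :: nat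
  have lapD: "\<delta> (iL + int t) = D t - D (t - 1)" if "1 \<le> t" for t
  proof -
    have "int (t - 1) = int t - 1" using that by simp
    then show ?thesis unfolding \<delta>_def lap_def D_def by (simp add: algebra_simps)
  qed
  have DL: "D L = D 0"
  proof -
    have "(iL + int L + 1) mod int L = (iL + 1) mod int L"
      by (metis add.commute add.left_commute mod_add_self2)
    then show ?thesis unfolding D_def by simp
  qed
  have sumD: "(\<Sum>t<L. D t) = 0"
  proof -
    define f where "f t = d ((iL + int t) mod int L)" for t :: nat
    have "(\<Sum>t<L. D t) = (\<Sum>t<L. f (Suc t) - f t)" unfolding D_def f_def by (simp add: algebra_simps)
    also have "\<dots> = f L - f 0" by (rule sum_lessThan_telescope)
    also have "\<dots> = 0" unfolding f_def by simp
    finally show ?thesis .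
  qed
  define s where "s = nat (i - iL)"
  have s: "1 \<le> s" "s \<le> L - 1" "iL + int s = i" using o w unfolding s_def by auto
  have mono: "D t \<le> D (t - 1)" if "1 \<le> t" "t \<le> L - 1" for t
    using lapD[OF that(1)] dint[of "iL + int t"] that w by simp
  have Ds: "D s \<le> D (s - 1) - 1" using lapD[OF s(1)] di s by simp
  have DLm: "D L \<le> D (L - 1) + 1"
  proof -
    have "\<delta> (iL + int L) = \<delta> iL" unfolding \<delta>_def by (metis lap_mod mod_add_self2)
    then show ?thesis using lapD[of L] L dL by simp
  qed
  have anti: "t \<le> u \<Longrightarrow> u \<le> L - 1 \<Longrightarrow> D u \<le> D t" for t u
  proof (induction u)
    case 0 then show ?case by simp
  next
    case (Suc u)
    show ?case
    proof (cases "t = Suc u")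
      case True then show ?thesis by simp
    next
      case False
      then have "D u \<le> D t" using Suc by simp
      moreover have "D (Suc u) \<le> D u" using mono[of "Suc u"] Suc.prems by simp
      ultimately show ?thesis by simp
    qed
  qed
  define e where "e t = D 0 - D t" for t
  have e01: "0 \<le> e t \<and> e t \<le> 1" if "t < L" for t
  proof -
    have "D t \<le> D 0" using anti[of 0 t] that by simp
    moreover have "D (L - 1) \<le> D t" using anti[of t "L - 1"] that by simp
    ultimately show ?thesis unfolding e_def using DLm DL by simp
  qed
  have eL: "1 \<le> e (L - 1)"
  proof -
    have "D (L - 1) \<le> D s" using anti[of s "L - 1"] s by simp
    moreover have "D (s - 1) \<le> D 0" using anti[of 0 "s - 1"] s by simp
    ultimately show ?thesis unfolding e_def using Ds by simp
  qed
  have sume: "(\<Sum>t<L. e t) = int L * D 0"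
    unfolding e_def using sumD by (simp add: sum_subtractf)
  have lo: "1 \<le> (\<Sum>t<L. e t)"
  proof -
    have "e (L - 1) \<le> (\<Sum>t<L. e t)"
      by (rule member_le_sum) (use L e01 in auto)
    then show ?thesis using eL by simp
  qed
  have hi: "(\<Sum>t<L. e t) < (\<Sum>t<L. 1)"
    by (rule sum_strict_mono_ex1) (use L e01 e_def in \<open>auto intro!: bexI[of _ 0]\<close>)
  have "1 \<le> int L * D 0" "int L * D 0 < int L" using lo hi sume by auto
  then show False
  proof (cases "D 0 \<ge> 1")
    case True
    then have "int L * 1 \<le> int L * D 0" by (intro mult_left_mono) auto
    then show False using \<open>int L * D 0 < int L\<close> by simp
  next
    case False
    then have "int L * D 0 \<le> int L * 0" by (intro mult_left_mono) auto
    then show False using \<open>1 \<le> int L * D 0\<close> by simp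
  qed
qed




fun msf :: "nat \<Rightarrow> (int \<Rightarrow> int) \<Rightarrow> int \<Rightarrow> int \<Rightarrow> nat \<Rightarrow> int \<Rightarrow> int" where
  "msf L m iL iR 0 = m"
| "msf L m iL iR (Suc k) = addc L (msf L m iL iR k) (ch L (iL + int (Suc k)) (iR - int (Suc k)))"

lemma msf_zc:
  assumes L: "0 < L" and w: "iR - iL \<le> int L" and k: "2 * int k \<le> iR - iL"
  shows "zc L alpha (msf L m iL iR k) y = zc L alpha m y + ind L iL y + ind L iR y - ind L (iL + int k) y - ind L (iR - int k) y"
  using k
proof (induction k)
  case 0 then show ?case by simp
next
  case (Suc k)
  have d: "0 \<le> (iR - int (Suc k)) - (iL + int (Suc k))" "(iR - int (Suc k)) - (iL + int (Suc k)) < int L"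
    using Suc.prems w by auto
  have e1: "iL + int (Suc k) - 1 = iL + int k" by simp
  have e2: "iR - int (Suc k) + 1 = iR - int k" by simp
  show ?case using Suc lap_ch[OF L d, of y] unfolding e1 e2 by (simp add: zc_addc[OF L])
qed

lemma ch_window:
  assumes L: "0 < L" and j: "iL \<le> j" "j < iL + int L" and p: "iL < p" and q: "q < iR" "iR - iL \<le> int L" and pq: "p \<le> q"
  shows "ch L p q (j mod int L) = (if p \<le> j \<and> j \<le> q then 1 else 0)"
proof -
  have m: "(j mod int L - p) mod int L = (j - p) mod int L" by (simp add: mod_simps)
  show ?thesis
  proof (cases "p \<le> j")
    case True
    then have "(j - p) mod int L = j - p" using j p by (intro mod_pos_pos_trivial) auto
    then show ?thesis unfolding ch_def m using True by auto
  next
    case False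
    then have "(j - p) mod int L = j - p + int L" using j p q pq by (intro mod_neg_small) auto
    then show ?thesis unfolding ch_def m using False q j by auto
  qed
qed

lemma msf_val:
  assumes L: "0 < L" and w: "iR - iL \<le> int L" and k: "2 * int k \<le> iR - iL"
    and j: "iL \<le> j" "j < iL + int L"
  shows "msf L m iL iR k (j mod int L) = m (j mod int L) + max 0 (min (int k) (min (j - iL) (iR - j)))"
  using k
proof (induction k)
  case 0 then show ?case by simp
next
  case (Suc k)
  have c: "ch L (iL + int (Suc k)) (iR - int (Suc k)) (j mod int L) =
     (if iL + int (Suc k) \<le> j \<and> j \<le> iR - int (Suc k) then 1 else 0)"
    by (rule ch_window) (use L j w Suc.prems in auto)
  have r: "0 \<le> j mod int L" "j mod int L < int L" using L by auto
  have "msf L m iL iR (Suc k) (j mod int L) = msf L m iL iR k (j mod int L) + ch L (iL + int (Suc k)) (iR - int (Suc k)) (j mod int L)"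
    using r by (simp add: addc_def)
  also have "\<dots> = m (j mod int L) + max 0 (min (int k) (min (j - iL) (iR - j))) +
     (if iL + int (Suc k) \<le> j \<and> j \<le> iR - int (Suc k) then 1 else 0)"
    using Suc c by simp
  also have "\<dots> = m (j mod int L) + max 0 (min (int (Suc k)) (min (j - iL) (iR - j)))"
    by (auto simp: max_def min_def)
  finally show ?case .
qed

lemma sum_len: "int (\<Sum>k\<in>{1..n}. nat (A - 2 * int k + 1)) = int n * A - int n * int n" if "2 * int n \<le> A" for n :: nat and A :: int
  using that
proof (induction n)
  case 0 then show ?case by simp
next
  case (Suc n)
  have "int (\<Sum>k\<in>{1..Suc n}. nat (A - 2 * int k + 1)) = int (\<Sum>k\<in>{1..n}. nat (A - 2 * int k + 1)) + int (nat (A - 2 * int (Suc n) + 1))"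
    by (simp add: sum.cl_ivl_Suc)
  also have "\<dots> = int n * A - int n * int n + (A - 2 * int (Suc n) + 1)" using Suc by simp
  also have "\<dots> = int (Suc n) * A - int (Suc n) * int (Suc n)" by (simp add: algebra_simps)
  finally show ?case .
qed




lemma arith_final:
  fixes iL i iR j l :: int
  assumes "iL < i" "i < iR" "l = min (i - iL) (iR - i)" "iL \<le> j"
  shows "max 0 (min l (min (j - iL) (iR - j))) = pos (j - iL) - pos (j - i) - pos (j - (iL + iR - i)) + pos (j - iR)"
  using assms unfolding pos_def by (auto simp: max_def min_def)

theorem proposition3:
  fixes L :: nat and alpha :: "int \<Rightarrow> real" and m :: "int \<Rightarrow> int"
    and i iL iR :: int
  assumes "0 < L"
    and "\<forall>j\<in>{0..<int L}. -1/2 < alpha j \<and> alpha j < 1/2"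
    and "generic L alpha"
    and "\<not> threshold L alpha m"
    and "i \<in> {0..<int L}" and "zc L alpha m i = zmax L alpha m"
    and "iL < i" and "i < iR"
    and "zc L alpha m iL + 1 \<le> zc L alpha m i"
    and "zc L alpha m iR + 1 \<le> zc L alpha m i"
    and "\<forall>j. iL < j \<and> j < iR \<longrightarrow> zc L alpha m i < zc L alpha m j + 1"
  shows "let l = nat (min (i - iL) (iR - i)) in
    \<exists>ms :: nat \<Rightarrow> int \<Rightarrow> int. \<exists>jss :: nat \<Rightarrow> int list.
      ms 0 = m \<and>
      (\<forall>k<l. zfa_iter L alpha (ms k) (jss (Suc k)) (ms (Suc k)) \<and>
              mset (jss (Suc k)) =
                mset (map (\<lambda>j. j mod int L) [iL + int (Suc k) .. iR - int (Suc k)]) \<and>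
              amax L alpha (ms k) = i \<and>
              zmax L alpha (ms k) = zc L alpha m i) \<and>
      int (\<Sum>k\<in>{1..l}. length (jss k)) = (i - iL) * (iR - i) \<and>
      (\<forall>j. zc L alpha (ms l) j = zc L alpha m j + ind L iL j + ind L iR j
                                  - ind L i j - ind L (iL + iR - i) j) \<and>
      (\<forall>j. iL \<le> j \<and> j < iL + int L \<longrightarrow>
         ms l (j mod int L) = m (j mod int L)
           + pos (j - iL) - pos (j - i) - pos (j - (iL + iR - i)) + pos (j - iR))"
proof -
  note L = assms(1) and gen = assms(3) and nt = assms(4) and irep = assms(5) and Mi = assms(6)
    and o = assms(7,8) and hL = assms(9) and hR = assms(10) and hyp = assms(11)
  define M where "M = zc L alpha m i"
  define l where "l = nat (min (i - iL) (iR - i))"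
  have lA: "int l \<le> i - iL" "int l \<le> iR - i" "int l = min (i - iL) (iR - i)" using o unfolding l_def by auto
  have z0le: "zc L alpha m y \<le> M" for y using zmax_ge[OF L, of alpha m y] Mi unfolding M_def by simp
  have hyp': "M - 1 < zc L alpha m y" if "iL < y" "y < iR" for y using hyp that unfolding M_def by force
  have w: "iR - iL \<le> int L"
  proof (rule ccontr)
    assume "\<not> ?thesis"
    then have "iL < iR - int L" "iR - int L < iR" using L by auto
    then have "M - 1 < zc L alpha m (iR - int L)" by (rule hyp')
    moreover have "zc L alpha m (iR - int L) = zc L alpha m iR" by (rule zc_cong) simp
    ultimately show False using hR unfolding M_def by linarith
  qed
  have wr: "zc L alpha m iL + 2 \<le> M" if "iR - iL = int L"
    using wrap[OF L nt Mi o that hyp] unfolding M_def .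
  have zk: "zc L alpha (msf L m iL iR k) y = zc L alpha m y + ind L iL y + ind L iR y - ind L (iL + int k) y - ind L (iR - int k) y"
    if "k \<le> l" for k y
    by (rule msf_zc[OF L w]) (use that lA in auto)
  have step: "zmax L alpha (msf L m iL iR k) = M \<and> amax L alpha (msf L m iL iR k) = i \<and>
     (\<exists>js. zfa_iter L alpha (msf L m iL iR k) js (msf L m iL iR (Suc k)) \<and>
        mset js = mset (map (\<lambda>j. j mod int L) [iL + int (Suc k) .. iR - int (Suc k)]))"
    if kl: "k < l" for k
  proof -
    define a where "a = iL + int (Suc k)"
    define b where "b = iR - int (Suc k)"
    have kk: "int k + 1 \<le> int l" using kl by simp
    have ab: "a \<le> i" "i \<le> b" "b - a + 2 \<le> int L" using kk lA w unfolding a_def b_def by auto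
    have zk': "zc L alpha (msf L m iL iR k) y = zc L alpha m y + ind L iL y + ind L iR y - ind L (iL + int k) y - ind L (iR - int k) y" for y
      using zk[of k y] kl by simp
    have H1: "zc L alpha (msf L m iL iR k) y \<le> M" for y
    proof -
      have le: "zc L alpha (msf L m iL iR k) y \<le> zc L alpha m y + ind L iL y + ind L iR y"
        using zk'[of y] ind_ge0[of L "iL + int k" y] ind_ge0[of L "iR - int k" y] by linarith
      show ?thesis
      proof (cases "ind L iL y = 1")
        case True
        have zy: "zc L alpha m y = zc L alpha m iL" using True ind1_iff zc_cong by metis
        show ?thesis
        proof (cases "ind L iR y = 1")
          case True2: True
          have "int L dvd (iR - iL)" using ind_both[OF True2 True] .
          then have "int L \<le> iR - iL" using o by (intro dvd_pos_ge) auto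
          then have "iR - iL = int L" using w by simp
          then show ?thesis using wr le zy True True2 by linarith
        next
          case False
          then have "ind L iR y = 0" using ind01 by metis
          then show ?thesis using le zy True hL unfolding M_def by linarith
        qed
      next
        case False
        then have F: "ind L iL y = 0" using ind01 by metis
        show ?thesis
        proof (cases "ind L iR y = 1")
          case True
          have zy: "zc L alpha m y = zc L alpha m iR" using True ind1_iff zc_cong by metis
          then show ?thesis using le True F hR unfolding M_def by linarith
        next
          case False
          then have "ind L iR y = 0" using ind01 by metis
          then show ?thesis using le F z0le[of y] by linarith
        qed
      qed
    qed
    have mid: "zc L alpha (msf L m iL iR k) y = zc L alpha m y" if "a \<le> y" "y \<le> b" for y
    proof -
      have "ind L iL y = 0" using that ab w kk lA unfolding a_def b_def by (intro ind0) auto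
      moreover have "ind L iR y = 0" using that ab w kk lA unfolding a_def b_def by (intro ind0) auto
      moreover have "ind L (iL + int k) y = 0" using that ab w kk lA unfolding a_def b_def by (intro ind0) auto
      moreover have "ind L (iR - int k) y = 0" using that ab w kk lA unfolding a_def b_def by (intro ind0) auto
      ultimately show ?thesis using zk'[of y] by simp
    qed
    have Hi: "zc L alpha (msf L m iL iR k) i = M" using mid[of i] ab unfolding M_def by simp
    have H2: "M - 1 < zc L alpha (msf L m iL iR k) y" if "a \<le> y" "y \<le> b" for y
      using mid[OF that] hyp'[of y] that kk unfolding a_def b_def by simp
    have ea: "a - 1 = iL + int k" unfolding a_def by simp
    have eb: "b + 1 = iR - int k" unfolding b_def by simp
    have H3a: "zc L alpha (msf L m iL iR k) (a - 1) \<le> M - 1"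
    proof (cases "k = 0")
      case True then show ?thesis using zk'[of iL] hL ea unfolding M_def by simp
    next
      case False
      have "ind L iL (iL + int k) = 0" using False w kk lA by (intro ind0) auto
      moreover have "ind L iR (iL + int k) = 0" using False w kk lA by (intro ind0) auto
      moreover have "ind L (iR - int k) (iL + int k) = 0" using False w kk lA by (intro ind0) auto
      ultimately show ?thesis using zk'[of "iL + int k"] ind_self[of L "iL + int k"] z0le[of "iL + int k"] ea by simp
    qed
    have H3b: "zc L alpha (msf L m iL iR k) (b + 1) \<le> M - 1"
    proof (cases "k = 0")
      case True then show ?thesis using zk'[of iR] hR eb unfolding M_def by simp
    next
      case False
      have "ind L iL (iR - int k) = 0" using False w kk lA by (intro ind0) auto
      moreover have "ind L iR (iR - int k) = 0" using False w kk lA by (intro ind0) auto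
      moreover have "ind L (iL + int k) (iR - int k) = 0" using False w kk lA by (intro ind0) auto
      ultimately show ?thesis using zk'[of "iR - int k"] ind_self[of L "iR - int k"] z0le[of "iR - int k"] eb by simp
    qed
    have H4: "zc L alpha (msf L m iL iR k) (a - 1) + 2 \<le> M" if "b - a + 2 = int L"
    proof -
      have k0: "k = 0" "iR - iL = int L" using that w unfolding a_def b_def by auto
      then show ?thesis using zk'[of iL] wr ea by simp
    qed
    have r: "zmax L alpha (msf L m iL iR k) = M \<and> amax L alpha (msf L m iL iR k) = i \<and>
      (\<exists>js. zfa_iter L alpha (msf L m iL iR k) js (addc L (msf L m iL iR k) (ch L a b)) \<and> mset js = mset (map (\<lambda>j. j mod int L) [a..b]))"
      using irep by (intro iter[OF L gen ab _ _ H1 Hi H2 H3a H3b H4]) auto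
    then show ?thesis unfolding a_def b_def by simp
  qed
  define jss where "jss n = (SOME js. zfa_iter L alpha (msf L m iL iR (n - 1)) js (msf L m iL iR n) \<and>
      mset js = mset (map (\<lambda>j. j mod int L) [iL + int n .. iR - int n]))" for n
  have jssP: "zfa_iter L alpha (msf L m iL iR k) (jss (Suc k)) (msf L m iL iR (Suc k)) \<and>
      mset (jss (Suc k)) = mset (map (\<lambda>j. j mod int L) [iL + int (Suc k) .. iR - int (Suc k)])" if "k < l" for k
    unfolding jss_def using step[OF that] by (simp only: diff_Suc_1) (rule someI_ex, blast)
  have len: "length (jss k) = nat ((iR - iL) - 2 * int k + 1)" if kin: "k \<in> {1..l}" for k
  proof -
    obtain k' where k': "k = Suc k'" "k' < l" using kin by (cases k) auto
    have "length (jss k) = size (mset (jss k))" by simp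
    also have "\<dots> = length [iL + int k .. iR - int k]" using jssP[OF k'(2)] k'(1) by simp
    finally show ?thesis by simp
  qed
  have sumeq: "int (\<Sum>k\<in>{1..l}. length (jss k)) = (i - iL) * (iR - i)"
  proof -
    have "(\<Sum>k\<in>{1..l}. length (jss k)) = (\<Sum>k\<in>{1..l}. nat ((iR - iL) - 2 * int k + 1))"
      by (rule sum.cong) (use len in auto)
    moreover have "int (\<Sum>k\<in>{1..l}. nat ((iR - iL) - 2 * int k + 1)) = int l * (iR - iL) - int l * int l"
      by (rule sum_len) (use lA(1,2) in linarith)
    moreover have "int l * (iR - iL) - int l * int l = (i - iL) * (iR - i)"
    proof (cases "i - iL \<le> iR - i")
      case True then have "i = iL + int l" using lA by simp
      then show ?thesis by (simp add: algebra_simps)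
    next
      case False then have "iR = i + int l" using lA by simp
      then show ?thesis by (simp add: algebra_simps)
    qed
    ultimately show ?thesis by simp
  qed
  have zfin: "zc L alpha (msf L m iL iR l) j = zc L alpha m j + ind L iL j + ind L iR j - ind L i j - ind L (iL + iR - i) j" for j
  proof (cases "i - iL \<le> iR - i")
    case True then have "int l = i - iL" using lA by simp
    then have e: "iL + int l = i" "iR - int l = iL + iR - i" by auto
    show ?thesis using zk[of l j] unfolding e by simp
  next
    case False then have "int l = iR - i" using lA by simp
    then have e: "iL + int l = iL + iR - i" "iR - int l = i" by auto
    show ?thesis using zk[of l j] unfolding e by simp
  qed
  have mfin: "msf L m iL iR l (j mod int L) = m (j mod int L)
           + pos (j - iL) - pos (j - i) - pos (j - (iL + iR - i)) + pos (j - iR)"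
    if "iL \<le> j" "j < iL + int L" for j
    using msf_val[OF L w _ that, of l m] lA arith_final[OF o lA(3) that(1)] by simp
  show ?thesis
    unfolding Let_def l_def[symmetric]
    using jssP step sumeq zfin mfin unfolding M_def
    by (intro exI[of _ "msf L m iL iR"] exI[of _ jss]) auto
qed


end
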